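(* Let $\Omega\subseteq\mathbb{R}^n$ be open and connected and let $u\in C^2(\Omega;\mathbb{R}^n)$. For $a\ge0$ set $\mathcal{L}_a:=\{A\in\mathbb{R}^{n\times n}: |A|=\sqrt a,\ \det A\neq0\}$. Consider: (a) there exists $a\ge0$ such that $Du(x)\in\mathcal{L}_a$ for all $x\in\Omega$; (b) $\Delta_\infty u=0$ on $\Omega$. Then (a) implies (b). Conversely, if $u$ is in addition a local diffeomorphism on $\Omega$, then (b) implies (a).
   Context: $|A|^2=\sum_{\alpha,i}A_{\alpha i}^2$. For $u\in C^2(\Omega;\mathbb{R}^n)$, $(\Delta_\infty u)_\alpha:=\sum_{i,j,\beta} D_iu_\alpha\, D_ju_\beta\, D^2_{ij}u_\beta+|Du|^2\sum_{\beta,i}[Du]^\perp_{\alpha\beta}\,D^2_{ii}u_\beta$, where $[Du(x)]^\perp$ is the orthogonal projection of $\mathbb{R}^n$ onto the null space of $Du(x)^\top$. *)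

theory Defs
  imports "HOL-Analysis.Analysis"
begin

text \<open>Jacobian matrix: (jac u x) $ alpha $ i = D_i u_alpha (x).\<close>
definition jac :: "(real^'n \<Rightarrow> real^'m) \<Rightarrow> real^'n \<Rightarrow> real^'n^'m" where
  "jac u x = matrix (frechet_derivative u (at x))"

text \<open>Second partial derivatives: hess2 u beta i j x = D_j (D_i u_beta) (x).\<close>
definition hess2 :: "(real^'n \<Rightarrow> real^'m) \<Rightarrow> 'm \<Rightarrow> 'n \<Rightarrow> 'n \<Rightarrow> real^'n \<Rightarrow> real" where
  "hess2 u \<beta> i j x = jac (\<lambda>y. \<chi> k. jac u y $ \<beta> $ k) x $ i $ j"

definition C2_on :: "(real^'n) set \<Rightarrow> (real^'n \<Rightarrow> real^'m) \<Rightarrow> bool" where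
  "C2_on \<Omega> u \<longleftrightarrow>
     (\<forall>x\<in>\<Omega>. u differentiable (at x)) \<and>
     (\<forall>x\<in>\<Omega>. \<forall>\<beta> i. (\<lambda>y. jac u y $ \<beta> $ i) differentiable (at x)) \<and>
     (\<forall>\<beta> i j. continuous_on \<Omega> (hess2 u \<beta> i j))"

definition fro_sq :: "real^'n^'m \<Rightarrow> real" where
  "fro_sq A = (\<Sum>\<alpha>\<in>UNIV. \<Sum>i\<in>UNIV. (A $ \<alpha> $ i)^2)"

definition orth_proj :: "(real^'n) set \<Rightarrow> real^'n \<Rightarrow> real^'n" where
  "orth_proj S v = (THE p. p \<in> S \<and> (\<forall>w\<in>S. (v - p) \<bullet> w = 0))"

text \<open>[A]^perp: matrix of the orthogonal projection onto the null space of A^T.\<close>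
definition perp_mat :: "real^'n^'m \<Rightarrow> real^'m^'m" where
  "perp_mat A = (\<chi> \<alpha> \<beta>. orth_proj {v. transpose A *v v = 0} (axis \<beta> 1) $ \<alpha>)"

definition inf_lap :: "(real^'n \<Rightarrow> real^'m) \<Rightarrow> real^'n \<Rightarrow> real^'m" where
  "inf_lap u x = (\<chi> \<alpha>.
     (\<Sum>i\<in>UNIV. \<Sum>j\<in>UNIV. \<Sum>\<beta>\<in>UNIV. jac u x $ \<alpha> $ i * jac u x $ \<beta> $ j * hess2 u \<beta> i j x)
     + fro_sq (jac u x) * (\<Sum>\<beta>\<in>UNIV. \<Sum>i\<in>UNIV. perp_mat (jac u x) $ \<alpha> $ \<beta> * hess2 u \<beta> i i x))"

definition Lset :: "real \<Rightarrow> (real^'n^'n) set" where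
  "Lset a = {A. sqrt (fro_sq A) = sqrt a \<and> det A \<noteq> 0}"

definition local_diffeo_on :: "(real^'n) set \<Rightarrow> (real^'n \<Rightarrow> real^'n) \<Rightarrow> bool" where
  "local_diffeo_on \<Omega> u \<longleftrightarrow>
     (\<forall>x\<in>\<Omega>. \<exists>V. open V \<and> x \<in> V \<and> V \<subseteq> \<Omega> \<and> open (u ` V) \<and> inj_on u V \<and>
        (\<forall>z\<in>V. u differentiable (at z)) \<and>
        (\<exists>g. (\<forall>z\<in>V. g (u z) = z) \<and> (\<forall>y\<in>u ` V. g differentiable (at y))))"

end

theory Submission imports Defs begin

lemma schwarz_aux:
  fixes f :: "'a::euclidean_space \<Rightarrow> real"
  assumes S: "open S" "x \<in> S"
    and Df: "\<And>y. y \<in> S \<Longrightarrow> (f has_derivative Df y) (at y)"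
    and Pa: "((\<lambda>y. Df y a) has_derivative Qa) (at x)"
    and e: "e > 0"
  shows "\<exists>d>0. \<forall>h. 0 < h \<and> h < d \<longrightarrow>
     \<bar>(f (x + h *\<^sub>R a + h *\<^sub>R b) - f (x + h *\<^sub>R a) - f (x + h *\<^sub>R b) + f x) - h^2 * Qa b\<bar> \<le> e * h^2"
proof -
  define K where "K = norm a + norm b + 1"
  have K: "K > 0" "norm a < K" "norm b < K" "norm a + norm b < K" unfolding K_def using norm_ge_zero[of a] norm_ge_zero[of b] by linarith+
  have blQ: "bounded_linear Qa" using Pa has_derivative_bounded_linear by blast
  obtain r where r: "r > 0" "ball x r \<subseteq> S" using S open_contains_ball by blast
  have inS: "x + v \<in> S" if "norm v < r" for v
  proof -
    have "dist x (x + v) < r" using that by (simp add: dist_norm)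
    then show ?thesis using r by auto
  qed
  define e' where "e' = e / (3 * K)"
  have e': "e' > 0" unfolding e'_def using e K by simp
  obtain d1 where d1: "d1 > 0" and d1b: "\<And>y. norm (y - x) < d1 \<Longrightarrow>
      norm (Df y a - Df x a - Qa (y - x)) \<le> e' * norm (y - x)"
    using Pa e' unfolding has_derivative_at_alt by blast
  define d where "d = min d1 r / K"
  have d: "d > 0" unfolding d_def using d1 r K by simp
  have "\<forall>h. 0 < h \<and> h < d \<longrightarrow>
     \<bar>(f (x + h *\<^sub>R a + h *\<^sub>R b) - f (x + h *\<^sub>R a) - f (x + h *\<^sub>R b) + f x) - h^2 * Qa b\<bar> \<le> e * h^2"
  proof (intro allI impI)
    fix h :: real assume h: "0 < h \<and> h < d"
    have hK: "h * K < min d1 r" using h K unfolding d_def by (simp add: field_simps)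
    have nb: "norm (s *\<^sub>R a + t *\<^sub>R b) < min d1 r" if "0 \<le> s" "s \<le> h" "0 \<le> t" "t \<le> h" for s t
    proof -
      have "norm (s *\<^sub>R a + t *\<^sub>R b) \<le> s * norm a + t * norm b"
        using norm_triangle_ineq[of "s *\<^sub>R a" "t *\<^sub>R b"] that by simp
      also have "\<dots> \<le> h * norm a + h * norm b"
        using that by (intro add_mono mult_right_mono) auto
      also have "\<dots> \<le> h * K" using K h by (simp add: K_def field_simps)
      finally show ?thesis using hK by simp
    qed
    define g where "g s = f (x + s *\<^sub>R a + h *\<^sub>R b) - f (x + s *\<^sub>R a)" for s
    define g' where "g' s = Df (x + s *\<^sub>R a + h *\<^sub>R b) a - Df (x + s *\<^sub>R a) a" for s
    have dir: "DERIV (\<lambda>s. f (x + s *\<^sub>R a + c)) s :> Df (x + s *\<^sub>R a + c) a"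
      if "x + s *\<^sub>R a + c \<in> S" for s c
    proof -
      have d0: "((\<lambda>s. x + s *\<^sub>R a + c) has_derivative (\<lambda>s. s *\<^sub>R a)) (at s)"
        by (auto intro!: derivative_eq_intros)
      have "((\<lambda>s. f (x + s *\<^sub>R a + c)) has_derivative (\<lambda>t. Df (x + s *\<^sub>R a + c) (t *\<^sub>R a))) (at s)"
        using has_derivative_compose[OF d0 Df[OF that]] by simp
      moreover have "(\<lambda>t. Df (x + s *\<^sub>R a + c) (t *\<^sub>R a)) = (*) (Df (x + s *\<^sub>R a + c) a)"
        using linear_cmul[OF has_derivative_linear[OF Df[OF that]]] by (auto simp: fun_eq_iff)
      ultimately show ?thesis unfolding has_field_derivative_def by simp
    qed
    have "DERIV g s :> g' s" if "0 \<le> s" "s \<le> h" for s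
    proof -
      have m1: "x + s *\<^sub>R a + h *\<^sub>R b \<in> S"
        using inS[of "s *\<^sub>R a + h *\<^sub>R b"] nb[of s h] that h by (simp add: add.assoc)
      have m2: "x + s *\<^sub>R a + 0 \<in> S"
        using inS[of "s *\<^sub>R a + 0 *\<^sub>R b"] nb[of s 0] that h by simp
      show ?thesis unfolding g_def g'_def
        using DERIV_diff[OF dir[OF m1] dir[OF m2]] by simp
    qed
    then obtain z where z: "0 < z" "z < h" "g h - g 0 = (h - 0) * g' z"
      using MVT2[of 0 h g g'] h by blast
    have gdiff: "g h - g 0 = f (x + h *\<^sub>R a + h *\<^sub>R b) - f (x + h *\<^sub>R a) - f (x + h *\<^sub>R b) + f x"
      unfolding g_def by simp
    let ?y1 = "x + z *\<^sub>R a + h *\<^sub>R b" and ?y2 = "x + z *\<^sub>R a"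
    have n1: "norm (?y1 - x) < d1" "norm (?y1 - x) \<le> h * K"
    proof -
      have "norm (z *\<^sub>R a + h *\<^sub>R b) \<le> z * norm a + h * norm b"
        using norm_triangle_ineq[of "z *\<^sub>R a" "h *\<^sub>R b"] z by simp
      also have "\<dots> \<le> h * norm a + h * norm b"
        using z by (intro add_mono mult_right_mono) auto
      also have "\<dots> \<le> h * K" using K h by (simp add: K_def field_simps)
      finally show "norm (?y1 - x) \<le> h * K" by simp
      then show "norm (?y1 - x) < d1" using hK by simp
    qed
    have n2: "norm (?y2 - x) < d1" "norm (?y2 - x) \<le> h * K"
    proof -
      have "norm (z *\<^sub>R a) \<le> h * norm a" using z by (simp add: mult_right_mono)
      also have "\<dots> \<le> h * K" using K h by (simp add: K_def field_simps)
      finally show "norm (?y2 - x) \<le> h * K" by simp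
      then show "norm (?y2 - x) < d1" using hK by simp
    qed
    have E1: "norm (Df ?y1 a - Df x a - Qa (?y1 - x)) \<le> e' * (h * K)"
      using d1b[OF n1(1)] n1(2) e' by (meson mult_left_mono less_imp_le order_trans)
    have E2: "norm (Df ?y2 a - Df x a - Qa (?y2 - x)) \<le> e' * (h * K)"
      using d1b[OF n2(1)] n2(2) e' by (meson mult_left_mono less_imp_le order_trans)
    have lin: "Qa (?y1 - x) - Qa (?y2 - x) = h * Qa b"
    proof -
      have lQ: "linear Qa" using blQ bounded_linear.linear by blast
      have "Qa (?y1 - x) - Qa (?y2 - x) = Qa ((?y1 - x) - (?y2 - x))"
        using linear_diff[OF lQ] by metis
      also have "(?y1 - x) - (?y2 - x) = h *\<^sub>R b" by simp
      finally show ?thesis using linear_cmul[OF lQ] by simp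
    qed
    have "g' z - h * Qa b = (Df ?y1 a - Df x a - Qa (?y1 - x)) - (Df ?y2 a - Df x a - Qa (?y2 - x))"
      unfolding g'_def using lin by simp
    then have "\<bar>g' z - h * Qa b\<bar> \<le> 2 * (e' * (h * K))"
      using E1 E2 by simp
    also have "\<dots> \<le> e * h" unfolding e'_def using K h e by (simp add: field_simps)
    finally have "\<bar>g' z - h * Qa b\<bar> \<le> e * h" .
    then have "h * \<bar>g' z - h * Qa b\<bar> \<le> h * (e * h)" using h by (simp add: mult_left_mono)
    moreover have "\<bar>(g h - g 0) - h^2 * Qa b\<bar> = h * \<bar>g' z - h * Qa b\<bar>"
    proof -
      have "(g h - g 0) - h^2 * Qa b = h * (g' z - h * Qa b)"
        using z by (simp add: power2_eq_square right_diff_distrib)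
      then show ?thesis using h by (simp add: abs_mult)
    qed
    ultimately show "\<bar>(f (x + h *\<^sub>R a + h *\<^sub>R b) - f (x + h *\<^sub>R a) - f (x + h *\<^sub>R b) + f x) - h^2 * Qa b\<bar> \<le> e * h^2"
      using gdiff by (simp add: power2_eq_square mult.commute mult.left_commute)
  qed
  then show ?thesis using d by blast
qed

lemma schwarz:
  fixes f :: "'a::euclidean_space \<Rightarrow> real"
  assumes S: "open S" "x \<in> S"
    and Df: "\<And>y. y \<in> S \<Longrightarrow> (f has_derivative Df y) (at y)"
    and Pa: "((\<lambda>y. Df y a) has_derivative Qa) (at x)"
    and Pb: "((\<lambda>y. Df y b) has_derivative Qb) (at x)"
  shows "Qa b = Qb a"
proof (rule ccontr)
  assume ne: "Qa b \<noteq> Qb a"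
  define D where "D = \<bar>Qa b - Qb a\<bar>"
  have D: "D > 0" using ne unfolding D_def by simp
  obtain d1 where d1: "d1 > 0" "\<forall>h. 0 < h \<and> h < d1 \<longrightarrow>
     \<bar>(f (x + h *\<^sub>R a + h *\<^sub>R b) - f (x + h *\<^sub>R a) - f (x + h *\<^sub>R b) + f x) - h^2 * Qa b\<bar> \<le> (D/4) * h^2"
    using schwarz_aux[OF S Df Pa, of "D/4" b] D by auto
  obtain d2 where d2: "d2 > 0" "\<forall>h. 0 < h \<and> h < d2 \<longrightarrow>
     \<bar>(f (x + h *\<^sub>R b + h *\<^sub>R a) - f (x + h *\<^sub>R b) - f (x + h *\<^sub>R a) + f x) - h^2 * Qb a\<bar> \<le> (D/4) * h^2"
    using schwarz_aux[OF S Df Pb, of "D/4" a] D by auto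
  define h where "h = min d1 d2 / 2"
  have h: "0 < h" "h < d1" "h < d2" unfolding h_def using d1 d2 by auto
  have eq: "x + h *\<^sub>R b + h *\<^sub>R a = x + h *\<^sub>R a + h *\<^sub>R b" by (simp add: algebra_simps)
  have A1: "\<bar>(f (x + h *\<^sub>R a + h *\<^sub>R b) - f (x + h *\<^sub>R a) - f (x + h *\<^sub>R b) + f x) - h^2 * Qa b\<bar> \<le> (D/4) * h^2"
    using d1 h by blast
  have A2: "\<bar>(f (x + h *\<^sub>R a + h *\<^sub>R b) - f (x + h *\<^sub>R a) - f (x + h *\<^sub>R b) + f x) - h^2 * Qb a\<bar> \<le> (D/4) * h^2"
    using d2 h eq by (smt (verit))
  have "h^2 * D \<le> (D/2) * h^2"
  proof -
    have "h^2 * D = \<bar>h^2 * Qa b - h^2 * Qb a\<bar>" unfolding D_def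
      by (simp add: abs_mult right_diff_distrib[symmetric])
    also have "\<dots> \<le> (D/4) * h^2 + (D/4) * h^2" using A1 A2 by linarith
    finally show ?thesis by simp
  qed
  moreover have "h^2 > 0" using h by simp
  ultimately have "h^2 * D > 0" using D by simp
  moreover have "D/2 * h^2 = (h^2 * D) / 2" by simp
  ultimately show False using \<open>h^2 * D \<le> (D/2) * h^2\<close> by linarith
qed

lemma det_ker: fixes A :: "real^'n^'n" shows "det A \<noteq> 0 \<longleftrightarrow> (\<forall>h. A *v h = 0 \<longrightarrow> h = 0)"
  by (metis invertible_det_nz invertible_left_inverse matrix_left_invertible_ker)

lemma perp_zero: fixes A :: "real^'n^'n" assumes "det A \<noteq> 0" shows "perp_mat A = 0"
proof -
  have "det (transpose A) \<noteq> 0" using assms by simp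
  then have K: "\<forall>h. transpose A *v h = 0 \<longrightarrow> h = 0" using det_ker[of "transpose A"] by blast
  have S: "{v. transpose A *v v = 0} = {0}"
  proof
    show "{v. transpose A *v v = 0} \<subseteq> {0}" using K by blast
    show "{0} \<subseteq> {v. transpose A *v v = 0}" by simp
  qed
  have P: "orth_proj {0} v = 0" for v
    unfolding orth_proj_def by (rule the_equality) auto
  show ?thesis unfolding perp_mat_def S P by (simp add: vec_eq_iff)
qed

lemma vec_has_derivative:
  fixes p :: "'k::finite \<Rightarrow> 'a::real_normed_vector \<Rightarrow> real"
  assumes "\<And>k. (p k has_derivative Q k) (at x)"
  shows "((\<lambda>y. \<chi> k. p k y) has_derivative (\<lambda>h. \<chi> k. Q k h)) (at x)"
  apply (subst has_derivative_componentwise_within)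
  using assms by (auto simp: Basis_vec_def inner_axis)

lemma jac_nth: "jac u y $ \<beta> $ k = frechet_derivative u (at y) (axis k 1) $ \<beta>"
  by (simp add: jac_def matrix_def)

lemma hess2_eq:
  assumes "\<And>k. ((\<lambda>y. jac u y $ \<beta> $ k) has_derivative Q k) (at x)"
  shows "hess2 u \<beta> i j x = Q i (axis j 1)"
proof -
  have V: "frechet_derivative (\<lambda>y. \<chi> k. jac u y $ \<beta> $ k) (at x) = (\<lambda>h. \<chi> k. Q k h)"
    using frechet_derivative_at[OF vec_has_derivative[of "\<lambda>k y. jac u y $ \<beta> $ k" Q, OF assms]] by (rule sym)
  show ?thesis unfolding hess2_def jac_def[of "\<lambda>y. \<chi> k. jac u y $ \<beta> $ k"] V
    by (simp add: matrix_def)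
qed

lemma F_deriv:
  assumes "\<And>\<alpha> i. ((\<lambda>y. jac u y $ \<alpha> $ i) has_derivative Q \<alpha> i) (at x)"
  shows "((\<lambda>y. fro_sq (jac u y)) has_derivative
     (\<lambda>h. \<Sum>\<alpha>\<in>UNIV. \<Sum>i\<in>UNIV. 2 * jac u x $ \<alpha> $ i * Q \<alpha> i h)) (at x)"
  unfolding fro_sq_def
  by (auto intro!: derivative_eq_intros assms simp: power2_eq_square mult_ac)


theorem lemma2p1:
  fixes u :: "real^'n \<Rightarrow> real^'n" and \<Omega> :: "(real^'n) set"
  assumes "open \<Omega>" and "connected \<Omega>" and "C2_on \<Omega> u"
  shows "((\<exists>a\<ge>0. \<forall>x\<in>\<Omega>. jac u x \<in> Lset a) \<longrightarrow> (\<forall>x\<in>\<Omega>. inf_lap u x = 0))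
       \<and> (local_diffeo_on \<Omega> u \<longrightarrow> (\<forall>x\<in>\<Omega>. inf_lap u x = 0) \<longrightarrow>
            (\<exists>a\<ge>0. \<forall>x\<in>\<Omega>. jac u x \<in> Lset a))"
proof -
  have ud: "\<And>x. x \<in> \<Omega> \<Longrightarrow> u differentiable (at x)"
    and pd: "\<And>x \<beta> i. x \<in> \<Omega> \<Longrightarrow> (\<lambda>y. jac u y $ \<beta> $ i) differentiable (at x)"
    using assms(3) unfolding C2_on_def by auto
  define Q where "Q x \<beta> i = frechet_derivative (\<lambda>y. jac u y $ \<beta> $ i) (at x)" for x \<beta> i
  have Qd: "((\<lambda>y. jac u y $ \<beta> $ i) has_derivative Q x \<beta> i) (at x)" if "x \<in> \<Omega>" for x \<beta> i
    unfolding Q_def using pd[OF that] frechet_derivative_works by blast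
  have H: "hess2 u \<beta> i j x = Q x \<beta> i (axis j 1)" if "x \<in> \<Omega>" for x \<beta> i j
    using hess2_eq[of u \<beta> "Q x \<beta>" x, OF Qd[OF that]] .
  have Hsym: "hess2 u \<beta> i j x = hess2 u \<beta> j i x" if x: "x \<in> \<Omega>" for x \<beta> i j
  proof -
    have Df: "((\<lambda>y. u y $ \<beta>) has_derivative (\<lambda>h. frechet_derivative u (at y) h $ \<beta>)) (at y)"
      if "y \<in> \<Omega>" for y
      using bounded_linear.has_derivative[OF bounded_linear_vec_nth
          frechet_derivative_works[THEN iffD1, OF ud[OF that]]] .
    have "Q x \<beta> i (axis j 1) = Q x \<beta> j (axis i 1)"
      by (rule schwarz[OF assms(1) x Df]) (use Qd[OF x] in \<open>simp_all add: jac_nth\<close>)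
    then show ?thesis using H x by simp
  qed
  define F where "F y = fro_sq (jac u y)" for y
  define F' where "F' x h = (\<Sum>\<alpha>\<in>UNIV. \<Sum>i\<in>UNIV. 2 * jac u x $ \<alpha> $ i * Q x \<alpha> i h)" for x h
  have Fd: "(F has_derivative F' x) (at x)" if "x \<in> \<Omega>" for x
    unfolding F_def F'_def using F_deriv[of u "Q x" x, OF Qd[OF that]] .
  define w where "w x k = (\<Sum>j\<in>UNIV. \<Sum>\<beta>\<in>UNIV. jac u x $ \<beta> $ j * hess2 u \<beta> k j x)" for x k
  have Fw: "F' x (axis k 1) = 2 * w x k" if x: "x \<in> \<Omega>" for x k
  proof -
    have "F' x (axis k 1) = (\<Sum>\<alpha>\<in>UNIV. \<Sum>i\<in>UNIV. 2 * (jac u x $ \<alpha> $ i * hess2 u \<alpha> k i x))"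
      unfolding F'_def using H[OF x] Hsym[OF x] by (simp add: mult.assoc)
    also have "\<dots> = 2 * (\<Sum>\<alpha>\<in>UNIV. \<Sum>i\<in>UNIV. jac u x $ \<alpha> $ i * hess2 u \<alpha> k i x)"
      by (simp only: sum_distrib_left)
    also have "(\<Sum>\<alpha>\<in>UNIV. \<Sum>i\<in>UNIV. jac u x $ \<alpha> $ i * hess2 u \<alpha> k i x) = w x k"
      unfolding w_def by (rule sum.swap)
    finally show ?thesis .
  qed
  have IL: "inf_lap u x = jac u x *v (\<chi> k. w x k)" if "x \<in> \<Omega>" "det (jac u x) \<noteq> 0" for x
    unfolding inf_lap_def w_def using perp_zero[OF that(2)]
    by (simp add: vec_eq_iff matrix_vector_mult_def sum_distrib_left mult.assoc)
  have Fnonneg: "F x \<ge> 0" for x unfolding F_def fro_sq_def by (intro sum_nonneg) auto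
  show ?thesis
  proof (intro conjI impI)
    assume "\<exists>a\<ge>0. \<forall>x\<in>\<Omega>. jac u x \<in> Lset a"
    then obtain a where a: "\<And>x. x \<in> \<Omega> \<Longrightarrow> F x = a \<and> det (jac u x) \<noteq> 0"
      unfolding Lset_def F_def by auto
    show "\<forall>x\<in>\<Omega>. inf_lap u x = 0"
    proof
      fix x assume x: "x \<in> \<Omega>"
      have "((\<lambda>y. a) has_derivative (\<lambda>h. 0)) (at x)" by simp
      then have "(F has_derivative (\<lambda>h. 0)) (at x)"
        by (rule has_derivative_transform_within_open[OF _ assms(1) x]) (use a in auto)
      then have "F' x = (\<lambda>h. 0)" using has_derivative_unique Fd[OF x] by blast
      then have "w x k = 0" for k using Fw[OF x, of k] by simp
      then have "(\<chi> k. w x k) = 0" by (simp add: vec_eq_iff)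
      then show "inf_lap u x = 0" using IL[OF x] a[OF x] by simp
    qed
  next
    assume ld: "local_diffeo_on \<Omega> u" and lap: "\<forall>x\<in>\<Omega>. inf_lap u x = 0"
    have det: "det (jac u x) \<noteq> 0" if x: "x \<in> \<Omega>" for x
    proof -
      obtain V g where V: "open V" "x \<in> V" "V \<subseteq> \<Omega>"
        and gV: "\<forall>z\<in>V. g (u z) = z" "\<forall>y\<in>u ` V. g differentiable (at y)"
        using ld x unfolding local_diffeo_on_def by meson
      define Du where "Du = frechet_derivative u (at x)"
      define G where "G = frechet_derivative g (at (u x))"
      have hu: "(u has_derivative Du) (at x)" unfolding Du_def
        using ud[OF x] frechet_derivative_works by blast
      have hg: "(g has_derivative G) (at (u x))" unfolding G_def
        using gV(2) V(2) frechet_derivative_works by blast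
      have hc: "((\<lambda>z. g (u z)) has_derivative (\<lambda>h. G (Du h))) (at x)"
        using has_derivative_compose[OF hu hg] .
      have hid: "((\<lambda>z. z) has_derivative (\<lambda>h. G (Du h))) (at x)"
        by (rule has_derivative_transform_within_open[OF hc V(1) V(2)]) (use gV in auto)
      have "(\<lambda>h. G (Du h)) = (\<lambda>h. h)"
        using has_derivative_unique[OF hid has_derivative_ident] .
      then have GD: "G (Du h) = h" for h by metis
      have lD: "linear Du" using hu has_derivative_linear by blast
      have lG: "linear G" using hg has_derivative_linear by blast
      have "\<forall>h. jac u x *v h = 0 \<longrightarrow> h = 0"
      proof (intro allI impI)
        fix h assume "jac u x *v h = 0"
        moreover have "jac u x *v h = Du h" unfolding jac_def Du_def[symmetric]
          using matrix_works lD linear_matrix_vector_mul_eq by blast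
        ultimately have "Du h = 0" by simp
        then show "h = 0" using GD[of h] linear_0[OF lG] by simp
      qed
      then show ?thesis using det_ker by blast
    qed
    have F0: "(F has_derivative (\<lambda>h. 0)) (at x)" if x: "x \<in> \<Omega>" for x
    proof -
      have "jac u x *v (\<chi> k. w x k) = 0" using IL[OF x det[OF x]] lap x by simp
      then have "(\<chi> k. w x k) = 0" using det[OF x] det_ker by blast
      then have w0: "w x k = 0" for k by (simp add: vec_eq_iff)
      have "F' x = (\<lambda>h. 0)"
      proof (rule linear_eq_stdbasis)
        show "linear (F' x)" using Fd[OF x] has_derivative_linear by blast
        show "linear (\<lambda>h::real^'n. 0::real)" by (simp add: linear_zero)
        fix b :: "real^'n" assume "b \<in> Basis"
        then obtain k where "b = axis k 1" unfolding Basis_vec_def by auto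
        then show "F' x b = 0" using Fw[OF x, of k] w0 by simp
      qed
      then show ?thesis using Fd[OF x] by simp
    qed
    have "continuous_on \<Omega> F"
      using F0 has_derivative_continuous continuous_at_imp_continuous_on by blast
    then have "F constant_on \<Omega>"
      using has_derivative_zero_connected_constant_on[OF assms(2) assms(1) finite.emptyI]
        F0 has_derivative_at_withinI by blast
    then obtain c where c: "\<And>x. x \<in> \<Omega> \<Longrightarrow> F x = c" unfolding constant_on_def by blast
    show "\<exists>a\<ge>0. \<forall>x\<in>\<Omega>. jac u x \<in> Lset a"
    proof (cases "\<Omega> = {}")
      case True then show ?thesis by auto
    next
      case False
      then obtain x0 where "x0 \<in> \<Omega>" by auto
      then have "c \<ge> 0" using c Fnonneg by metis
      then show ?thesis using c det unfolding Lset_def F_def by auto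
    qed
  qed
qed

end
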